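(* Let $A,B\subset\mathbb N$ be such that $A\cup B$ is a set of pointwise recurrence for minimal distal systems. Then at least one of $A$, $B$ is a set of pointwise recurrence for minimal distal systems.
   Context: A system is a compact metric space with a homeomorphism $T$; minimal: no proper nonempty closed invariant subset; distal: $\inf_{n\in\mathbb Z}d(T^nx,T^nx')>0$ for $x\ne x'$. $R\subset\mathbb N$ is a set of pointwise recurrence for minimal distal systems if for every minimal distal system $(X,T)$ and every $x\in X$, $\inf_{n\in R}d(T^nx,x)=0$. *)

theory Defs
  imports "HOL-Analysis.Analysis"
begin

definition is_system :: "'a::metric_space set \<Rightarrow> ('a \<Rightarrow> 'a) \<Rightarrow> bool" where
  "is_system X T \<longleftrightarrow> compact X \<and> (\<exists>S. homeomorphism X X T S)"

definition int_iter :: "'a set \<Rightarrow> ('a \<Rightarrow> 'a) \<Rightarrow> int \<Rightarrow> 'a \<Rightarrow> 'a" where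
  "int_iter X T n = (if 0 \<le> n then T ^^ nat n else (inv_into X T) ^^ nat (- n))"

definition minimal_system :: "'a::metric_space set \<Rightarrow> ('a \<Rightarrow> 'a) \<Rightarrow> bool" where
  "minimal_system X T \<longleftrightarrow> is_system X T \<and>
     (\<forall>Y. Y \<subseteq> X \<and> Y \<noteq> {} \<and> closed Y \<and> T ` Y = Y \<longrightarrow> Y = X)"

definition distal_system :: "'a::metric_space set \<Rightarrow> ('a \<Rightarrow> 'a) \<Rightarrow> bool" where
  "distal_system X T \<longleftrightarrow> is_system X T \<and>
     (\<forall>x\<in>X. \<forall>x'\<in>X. x \<noteq> x' \<longrightarrow>
        (\<exists>e>0. \<forall>n::int. e \<le> dist (int_iter X T n x) (int_iter X T n x')))"

definition pw_recurrence_md :: "'a::metric_space itself \<Rightarrow> nat set \<Rightarrow> bool" where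
  "pw_recurrence_md _ R \<longleftrightarrow>
     (\<forall>(X::'a set) T. minimal_system X T \<and> distal_system X T \<longrightarrow>
        (\<forall>x\<in>X. \<forall>e>0. \<exists>n\<in>R. dist ((T ^^ n) x) x < e))"

end

theory Submission
  imports Defs
begin

lemma compact_imp_closed_fun:
  fixes K :: "('a \<Rightarrow> 'b::metric_space) set"
  assumes "compact K" shows "closed K"
proof -
  have H: "Hausdorff_space (euclidean :: ('a \<Rightarrow> 'b) topology)"
    by (metis Hausdorff_space_euclidean Hausdorff_space_product_topology euclidean_product_topology)
  have "closedin euclidean K"
    by (rule compactin_imp_closedin[OF H]) (simp add: assms)
  then show ?thesis by simp
qed

lemma compact_Pi_UNIV:
  fixes Z :: "'b::topological_space set"
  assumes "compact Z"
  shows "compact {f::'a \<Rightarrow> 'b. \<forall>z. f z \<in> Z}"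
proof -
  have "compactin (product_topology (\<lambda>_. euclidean) UNIV) (PiE (UNIV::'a set) (\<lambda>_. Z))"
    using assms by (simp add: compactin_PiE)
  moreover have "PiE (UNIV::'a set) (\<lambda>_. Z) = {f::'a \<Rightarrow> 'b. \<forall>z. f z \<in> Z}"
    by (auto simp: PiE_UNIV_domain)
  ultimately show ?thesis
    by (simp add: euclidean_product_topology)
qed

lemma cont_eval: "continuous_on S (\<lambda>f::'a \<Rightarrow> 'b::topological_space. f z)"
  by (rule continuous_on_subset[OF continuous_on_product_coordinates]) simp

lemma cont_rmult: "continuous_on S (\<lambda>p::'a \<Rightarrow> 'b::topological_space. p \<circ> a)"
  by (rule continuous_on_coordinatewise_then_product) (simp only: o_def cont_eval)

lemma finite_chain_min:
  assumes "finite F" "F \<noteq> {}" "\<And>a b. a \<in> F \<Longrightarrow> b \<in> F \<Longrightarrow> a \<subseteq> b \<or> b \<subseteq> a"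
  shows "\<exists>M\<in>F. \<forall>X\<in>F. M \<subseteq> X"
  using assms
proof (induction F rule: finite_ne_induct)
  case (singleton x) then show ?case by auto
next
  case (insert x F)
  then obtain M where "M \<in> F" "\<forall>X\<in>F. M \<subseteq> X" by blast
  with insert.prems show ?case
    by (metis insert_iff subset_trans)
qed

lemma ellis_numakura:
  fixes L :: "('a::metric_space \<Rightarrow> 'a) set"
  assumes "compact L" "L \<noteq> {}" "\<And>p q. p \<in> L \<Longrightarrow> q \<in> L \<Longrightarrow> p \<circ> q \<in> L"
  shows "\<exists>u\<in>L. u \<circ> u = u"
proof -
  define F where "F = {K. K \<subseteq> L \<and> K \<noteq> {} \<and> closed K \<and> (\<forall>p\<in>K. \<forall>q\<in>K. p \<circ> q \<in> K)}"
  have LF: "L \<in> F" using assms compact_imp_closed_fun by (auto simp: F_def)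
  have po: "partial_order_on F (relation_of (\<lambda>a b. b \<subseteq> a) F)"
    by (rule partial_order_on_relation_ofI) auto
  have "\<exists>m \<in> F. \<forall>a \<in> F. a \<subseteq> m \<longrightarrow> a = m"
  proof (rule predicate_Zorn[OF po])
    fix C assume C: "C \<in> Chains (relation_of (\<lambda>a b. b \<subseteq> a) F)"
    then have CF: "C \<subseteq> F" and cmp: "\<And>a b. a \<in> C \<Longrightarrow> b \<in> C \<Longrightarrow> a \<subseteq> b \<or> b \<subseteq> a"
      by (auto simp: Chains_def relation_of_def)
    show "\<exists>u\<in>F. \<forall>a\<in>C. u \<subseteq> a"
    proof (cases "C = {}")
      case True then show ?thesis using LF by auto
    next
      case False
      have ne: "L \<inter> \<Inter>C \<noteq> {}"
      proof (rule compact_imp_fip[OF assms(1)])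
        show "closed T" if "T \<in> C" for T using that CF by (auto simp: F_def)
        fix F' assume F': "finite F'" "F' \<subseteq> C"
        show "L \<inter> \<Inter>F' \<noteq> {}"
        proof (cases "F' = {}")
          case True then show ?thesis using assms by auto
        next
          case False
          then obtain M where "M \<in> F'" "\<forall>X\<in>F'. M \<subseteq> X"
            using finite_chain_min[OF F'(1) False] cmp F'(2) by blast
          moreover have "M \<subseteq> L" "M \<noteq> {}" using \<open>M \<in> F'\<close> F'(2) CF by (auto simp: F_def)
          ultimately show ?thesis by blast
        qed
      qed
      have "\<Inter>C \<in> F"
      proof -
        obtain K0 where "K0 \<in> C" using False by blast
        then have "K0 \<subseteq> L" using CF by (auto simp: F_def)
        then have "\<Inter>C \<subseteq> L" using \<open>K0 \<in> C\<close> by blast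
        moreover have "closed (\<Inter>C)" using CF unfolding F_def by (intro closed_Inter) blast
        moreover have "\<forall>p\<in>\<Inter>C. \<forall>q\<in>\<Inter>C. p \<circ> q \<in> \<Inter>C"
        proof (intro ballI InterI)
          fix p q X assume "p \<in> \<Inter>C" "q \<in> \<Inter>C" "X \<in> C"
          then have "p \<in> X" "q \<in> X" "X \<in> F" using CF by auto
          then show "p \<circ> q \<in> X" unfolding F_def by blast
        qed
        moreover have "\<Inter>C \<noteq> {}" using ne by blast
        ultimately show ?thesis unfolding F_def by blast
      qed
      then show ?thesis by auto
    qed
  qed
  then obtain A where AF: "A \<in> F" and Amin: "\<And>B. B \<in> F \<Longrightarrow> B \<subseteq> A \<Longrightarrow> B = A" by blast
  then have AL: "A \<subseteq> L" and Ane: "A \<noteq> {}" and Acl: "closed A"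
    and Asg: "\<And>p q. p \<in> A \<Longrightarrow> q \<in> A \<Longrightarrow> p \<circ> q \<in> A" by (auto simp: F_def)
  have Acp: "compact A" using Acl AL assms(1) compact_Int_closed inf.absorb2 by metis
  obtain a where aA: "a \<in> A" using Ane by auto
  define B where "B = (\<lambda>p. p \<circ> a) ` A"
  have "B \<in> F"
  proof -
    have "compact B" unfolding B_def by (rule compact_continuous_image[OF cont_rmult Acp])
    then have "closed B" by (rule compact_imp_closed_fun)
    moreover have "B \<subseteq> L" using Asg aA AL by (auto simp: B_def)
    moreover have "B \<noteq> {}" using aA by (auto simp: B_def)
    moreover have "\<forall>p\<in>B. \<forall>q\<in>B. p \<circ> q \<in> B"
    proof (clarify)
      fix p q assume "p \<in> B" "q \<in> B"
      then obtain p' q' where "p' \<in> A" "q' \<in> A" "p = p' \<circ> a" "q = q' \<circ> a" by (auto simp: B_def)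
      then have "p \<circ> q = (p' \<circ> a \<circ> q') \<circ> a" by (simp add: comp_assoc)
      moreover have "p' \<circ> a \<circ> q' \<in> A" using Asg \<open>p' \<in> A\<close> \<open>q' \<in> A\<close> aA by blast
      ultimately show "p \<circ> q \<in> B" by (auto simp: B_def)
    qed
    ultimately show ?thesis by (auto simp: F_def)
  qed
  moreover have "B \<subseteq> A" using Asg aA by (auto simp: B_def)
  ultimately have "B = A" using Amin by blast
  then have "a \<in> B" using aA by simp
  then obtain e where eA: "e \<in> A" and ea: "e \<circ> a = a" by (auto simp: B_def)
  define K where "K = {p \<in> A. p \<circ> a = a}"
  have "K \<in> F"
  proof -
    have "K = (\<Inter>z. {p \<in> A. p (a z) = a z})" by (auto simp: K_def fun_eq_iff)
    moreover have "closed {p \<in> A. p (a z) = a z}" for z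
      by (rule continuous_closed_preimage_constant[OF cont_eval Acl])
    ultimately have "closed K" by auto
    moreover have "\<forall>p\<in>K. \<forall>q\<in>K. p \<circ> q \<in> K"
      using Asg by (auto simp: K_def comp_assoc)
    ultimately show ?thesis using eA ea AL by (auto simp: F_def K_def)
  qed
  moreover have "K \<subseteq> A" by (auto simp: K_def)
  ultimately have "K = A" using Amin by blast
  then have "a \<circ> a = a" using aA by (auto simp: K_def)
  then show ?thesis using aA AL by blast
qed


lemma ellis_core:
  fixes T :: "'a::metric_space \<Rightarrow> 'a"
  assumes Z: "compact Z" and cT: "continuous_on Z T" and TZ: "T ` Z \<subseteq> Z" and xi: "\<xi> \<in> Z"
    and dis: "\<And>z. z \<in> Z \<Longrightarrow> z \<noteq> \<xi> \<Longrightarrow> \<exists>e>0. \<forall>n. e \<le> dist ((T^^n) \<xi>) ((T^^n) z)"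
    and Yne: "Y \<noteq> {}" and Ycl: "closed Y" and Ysub: "Y \<subseteq> closure (range (\<lambda>n. (T^^n) \<xi>))"
    and TY: "T ` Y \<subseteq> Y"
  shows "\<xi> \<in> Y"
proof -
  have Zcl: "closed Z" using Z compact_imp_closed by blast
  have iterZ: "z \<in> Z \<Longrightarrow> (T^^n) z \<in> Z" for z n
    by (induction n) (use TZ in auto)
  have clZ: "closure (range (\<lambda>n. (T^^n) \<xi>)) \<subseteq> Z"
    using iterZ xi Zcl by (intro closure_minimal) auto
  have YZ: "Y \<subseteq> Z" using Ysub clZ by blast
  define T' where "T' = (\<lambda>z. if z \<in> Z then T z else \<xi>)"
  have T'Z: "T' z \<in> Z" for z using TZ xi by (auto simp: T'_def)
  have iter: "z \<in> Z \<Longrightarrow> (T'^^n) z = (T^^n) z" for z n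
  proof (induction n)
    case (Suc n) then show ?case using iterZ by (simp add: T'_def)
  qed simp
  have cT': "continuous_on Z T'"
    using cT by (rule continuous_on_eq) (simp add: T'_def)
  define P where "P = {f::'a \<Rightarrow> 'a. \<forall>z. f z \<in> Z}"
  have Pcp: "compact P" unfolding P_def by (rule compact_Pi_UNIV[OF Z])
  have Pcl: "closed P" by (rule compact_imp_closed_fun[OF Pcp])
  have T'nP: "T'^^Suc n \<in> P" for n
    unfolding P_def by (simp add: T'Z)
  define R where "R = range (\<lambda>n. T'^^Suc n)"
  define E where "E = closure R"
  have RP: "R \<subseteq> P" using T'nP by (auto simp: R_def)
  have EP: "E \<subseteq> P" unfolding E_def by (rule closure_minimal[OF RP Pcl])
  have Ecl: "closed E" unfolding E_def by simp
  have Ecp: "compact E"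
    using compact_Int_closed[OF Pcp Ecl] EP by (simp add: Int_absorb1)
  have cl: "continuous_on P (\<lambda>q. T' \<circ> q)"
  proof (rule continuous_on_coordinatewise_then_product)
    fix z
    show "continuous_on P (\<lambda>q. (T' \<circ> q) z)"
      unfolding o_def
      by (rule continuous_on_compose2[OF cT' cont_eval]) (auto simp: P_def)
  qed
  have lT: "T' \<circ> q \<in> E" if "q \<in> E" for q
  proof -
    have "(\<lambda>q. T' \<circ> q) ` closure R \<subseteq> E"
    proof (rule image_closure_subset)
      show "continuous_on (closure R) (\<lambda>q. T' \<circ> q)"
        using cl EP E_def continuous_on_subset by blast
      show "closed E" by (rule Ecl)
      show "(\<lambda>q. T' \<circ> q) ` R \<subseteq> E"
      proof
        fix f assume "f \<in> (\<lambda>q. T' \<circ> q) ` R"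
        then obtain n where f: "f = T' \<circ> T'^^Suc n" by (auto simp: R_def)
        have "f = T'^^Suc (Suc n)" unfolding f by (simp only: funpow.simps(2))
        then have "f \<in> R" unfolding R_def by (rule range_eqI)
        then show "f \<in> E" using closure_subset E_def by blast
      qed
    qed
    then show ?thesis using that E_def by blast
  qed
  have lTn: "T'^^Suc n \<circ> q \<in> E" if "q \<in> E" for q n
  proof (induction n)
    case 0 then show ?case using lT[OF that] by (simp only: funpow.simps comp_id)
  next
    case (Suc n)
    have eq: "T'^^Suc (Suc n) \<circ> q = T' \<circ> (T'^^Suc n \<circ> q)" by (simp only: funpow.simps(2) comp_assoc)
    show ?case unfolding eq by (rule lT[OF Suc.IH])
  qed
  have Emul: "p \<circ> q \<in> E" if "p \<in> E" "q \<in> E" for p q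
  proof -
    have "(\<lambda>p. p \<circ> q) ` closure R \<subseteq> E"
      by (rule image_closure_subset[OF cont_rmult Ecl]) (auto simp: R_def simp del: funpow.simps intro: lTn[OF that(2)])
    then show ?thesis using that(1) E_def by blast
  qed
  have iterY: "y \<in> Y \<Longrightarrow> (T^^n) y \<in> Y" for y n
    by (induction n) (use TY in auto)
  have Einv: "p y \<in> Y" if pE: "p \<in> E" and yY: "y \<in> Y" for p y
  proof -
    have "(\<lambda>p. p y) ` closure R \<subseteq> Y"
    proof (rule image_closure_subset[OF cont_eval Ycl])
      show "(\<lambda>p. p y) ` R \<subseteq> Y"
      proof -
        have "(T'^^Suc n) y \<in> Y" for n
          using iter[of y "Suc n"] YZ yY iterY[of y "Suc n"] by (metis subsetD)
        then show ?thesis unfolding R_def by blast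
      qed
    qed
    then show ?thesis using pE E_def by blast
  qed
  have Edis: "p \<xi> \<noteq> p z" if pE: "p \<in> E" and zZ: "z \<in> Z" and zx: "z \<noteq> \<xi>" for p z
  proof -
    obtain e where e: "e > 0" "\<And>n. e \<le> dist ((T^^n) \<xi>) ((T^^n) z)" using dis[OF zZ zx] by blast
    have "(\<lambda>p. dist (p \<xi>) (p z)) ` closure R \<subseteq> {e..}"
    proof (rule image_closure_subset)
      show "continuous_on (closure R) (\<lambda>p. dist (p \<xi>) (p z))"
        by (intro continuous_on_dist cont_eval)
      show "(\<lambda>p. dist (p \<xi>) (p z)) ` R \<subseteq> {e..}"
        using e(2) iter[OF xi] iter[OF zZ] by (auto simp: R_def simp del: funpow.simps)
    qed simp
    then have "e \<le> dist (p \<xi>) (p z)" using pE E_def by blast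
    then show ?thesis using e(1) by auto
  qed
  define L where "L = {p \<in> E. p \<xi> \<in> Y}"
  have Lcl: "closed L"
  proof -
    have "L = E \<inter> (\<lambda>p. p \<xi>) -` Y" by (auto simp: L_def)
    then show ?thesis using continuous_closed_preimage[OF cont_eval Ecl Ycl] by simp
  qed
  have Lcp: "compact L"
    using compact_Int_closed[OF Ecp Lcl] by (simp add: L_def Int_absorb1 subset_iff)
  have Lne: "L \<noteq> {}"
  proof -
    obtain y where yY: "y \<in> Y" using Yne by blast
    have "T ` closure (range (\<lambda>n. (T^^n) \<xi>)) \<subseteq> closure (range (\<lambda>n. (T^^Suc n) \<xi>))"
    proof (rule image_closure_subset)
      show "continuous_on (closure (range (\<lambda>n. (T^^n) \<xi>))) T"
        using cT clZ continuous_on_subset by blast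
      show "T ` range (\<lambda>n. (T ^^ n) \<xi>) \<subseteq> closure (range (\<lambda>n. (T ^^ Suc n) \<xi>))"
      proof
        fix w assume "w \<in> T ` range (\<lambda>n. (T ^^ n) \<xi>)"
        then obtain n where "w = T ((T^^n) \<xi>)" by blast
        then have "w = (\<lambda>n. (T^^Suc n) \<xi>) n" by simp
        then have "w \<in> range (\<lambda>n. (T ^^ Suc n) \<xi>)" by (rule range_eqI)
        then show "w \<in> closure (range (\<lambda>n. (T ^^ Suc n) \<xi>))" by (rule subsetD[OF closure_subset])
      qed
    qed simp
    then have Ty: "T y \<in> closure (range (\<lambda>n. (T^^Suc n) \<xi>))" using yY Ysub by blast
    have Exi: "compact ((\<lambda>p. p \<xi>) ` E)" by (rule compact_continuous_image[OF cont_eval Ecp])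
    have "range (\<lambda>n. (T^^Suc n) \<xi>) \<subseteq> (\<lambda>p. p \<xi>) ` E"
    proof (rule image_subsetI)
      fix n
      have "T'^^Suc n \<in> R" unfolding R_def by (rule rangeI)
      then have mem: "T'^^Suc n \<in> E" unfolding E_def by (rule subsetD[OF closure_subset])
      have eq: "(T^^Suc n) \<xi> = (T'^^Suc n) \<xi>" using iter[OF xi] by metis
      show "(T^^Suc n) \<xi> \<in> (\<lambda>p. p \<xi>) ` E" by (rule image_eqI[of _ "\<lambda>p. p \<xi>", OF eq mem])
    qed
    then have "closure (range (\<lambda>n. (T^^Suc n) \<xi>)) \<subseteq> (\<lambda>p. p \<xi>) ` E"
      by (rule closure_minimal) (rule compact_imp_closed[OF Exi])
    then have "T y \<in> (\<lambda>p. p \<xi>) ` E" using Ty by (rule subsetD)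
    then obtain p where pE: "p \<in> E" and pT: "T y = p \<xi>" by (rule imageE)
    have "T y \<in> Y" using TY yY by (rule subsetD[OF _ imageI])
    then have "p \<in> L" unfolding L_def using pE pT by simp
    then show ?thesis by blast
  qed
  have Lmul: "p \<circ> q \<in> L" if "p \<in> L" "q \<in> L" for p q
    using that Emul Einv unfolding L_def by (simp del: funpow.simps)
  obtain u where uL: "u \<in> L" and uu: "u \<circ> u = u"
    using ellis_numakura[OF Lcp Lne Lmul] by blast
  have "u \<xi> \<in> Y" "u \<in> E" using uL by (auto simp: L_def)
  show "\<xi> \<in> Y"
  proof (rule ccontr)
    assume "\<xi> \<notin> Y"
    then have "u \<xi> \<noteq> \<xi>" using \<open>u \<xi> \<in> Y\<close> by auto
    then have "u \<xi> \<noteq> u (u \<xi>)" using Edis[OF \<open>u \<in> E\<close>, of "u \<xi>"] \<open>u \<xi> \<in> Y\<close> YZ by auto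
    moreover have "u (u \<xi>) = u \<xi>" using uu by (metis comp_apply)
    ultimately show False by simp
  qed
qed

definition evc :: "(nat \<Rightarrow> real) \<Rightarrow> nat \<Rightarrow> real" where "evc z = (\<lambda>k. z (2*k))"
definition odc :: "(nat \<Rightarrow> real) \<Rightarrow> nat \<Rightarrow> real" where "odc z = (\<lambda>k. z (2*k+1))"
definition ilv :: "(nat \<Rightarrow> real) \<Rightarrow> (nat \<Rightarrow> real) \<Rightarrow> nat \<Rightarrow> real" where
  "ilv a b = (\<lambda>k. if even k then a (k div 2) else b (k div 2))"

lemma evc_ilv [simp]: "evc (ilv a b) = a" by (simp add: evc_def ilv_def)
lemma odc_ilv [simp]: "odc (ilv a b) = b" by (simp add: odc_def ilv_def)
lemma ilv_evc_odc [simp]: "ilv (evc z) (odc z) = z"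
proof
  fix k show "ilv (evc z) (odc z) k = z k"
  proof (cases "even k")
    case True then obtain j where "k = 2*j" by blast
    then show ?thesis by (simp add: ilv_def evc_def)
  next
    case False then obtain j where "k = 2*j+1" using oddE by blast
    then show ?thesis by (simp add: ilv_def odc_def)
  qed
qed

lemma cont_evc: "continuous_on S evc"
  unfolding evc_def by (rule continuous_on_coordinatewise_then_product) (rule cont_eval)
lemma cont_odc: "continuous_on S odc"
  unfolding odc_def by (rule continuous_on_coordinatewise_then_product) (rule cont_eval)
lemma cont_ilv:
  assumes "continuous_on S f" "continuous_on S g"
  shows "continuous_on S (\<lambda>z. ilv (f z) (g z))"
proof (rule continuous_on_coordinatewise_then_product)
  fix k
  show "continuous_on S (\<lambda>z. ilv (f z) (g z) k)"
    by (cases "even k") (simp_all add: ilv_def continuous_on_product_then_coordinatewise assms)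
qed

lemma inv_into_sub:
  assumes "inj_on T U" "V \<subseteq> U" "T ` V = V" "w \<in> V"
  shows "inv_into V T w = inv_into U T w \<and> inv_into V T w \<in> V"
proof -
  have w: "w \<in> T ` V" using assms by simp
  define v where "v = inv_into V T w"
  have v: "v \<in> V" "T v = w" using w by (auto simp: v_def inv_into_into f_inv_into_f)
  have "inv_into U T w = v" using v assms inv_into_f_f by (metis subsetD)
  then show ?thesis using v by (simp add: v_def)
qed

lemma int_iter_sub:
  assumes "inj_on T U" "V \<subseteq> U" "T ` V = V" "w \<in> V"
  shows "int_iter V T n w = int_iter U T n w \<and> int_iter V T n w \<in> V"
proof (cases "0 \<le> n")
  case True
  have "(T^^m) w \<in> V" for m by (induction m) (use assms in auto)
  then show ?thesis using True by (simp add: int_iter_def)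
next
  case False
  have "((inv_into V T)^^m) w = ((inv_into U T)^^m) w \<and> ((inv_into V T)^^m) w \<in> V" for m
  proof (induction m)
    case (Suc m)
    then have "((inv_into U T)^^m) w \<in> V" by metis
    then have "inv_into V T (((inv_into U T)^^m) w) = inv_into U T (((inv_into U T)^^m) w) \<and> inv_into V T (((inv_into U T)^^m) w) \<in> V"
      by (rule inv_into_sub[OF assms(1-3)])
    then show ?case using Suc by (metis funpow.simps(2) o_apply)
  qed (use assms in simp)
  moreover have "int_iter V T n = (inv_into V T)^^nat (- n)" "int_iter U T n = (inv_into U T)^^nat (- n)"
    using False by (simp_all add: int_iter_def)
  ultimately show ?thesis by metis
qed

lemma int_iter_in:
  assumes "T ` X = X" "a \<in> X"
  shows "int_iter X T n a \<in> X"
proof (cases "0 \<le> n")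
  case True
  have "(T^^m) a \<in> X" for m by (induction m) (use assms in auto)
  then show ?thesis using True by (simp add: int_iter_def)
next
  case False
  have "((inv_into X T)^^m) a \<in> X" for m
  proof (induction m)
    case (Suc m) then show ?case using assms(1) inv_into_into[of _ T X] by (metis funpow.simps(2) o_apply)
  qed (use assms in simp)
  then show ?thesis using False by (simp add: int_iter_def)
qed

lemma int_iter_nat: "int_iter X T (int n) = T^^n"
  by (simp add: int_iter_def)


lemma sys_facts:
  assumes "is_system X T"
  shows "compact X" "continuous_on X T" "T ` X = X" "inj_on T X"
proof -
  obtain S where h: "homeomorphism X X T S" using assms by (auto simp: is_system_def)
  show "compact X" using assms by (simp add: is_system_def)
  show "continuous_on X T" "T ` X = X" using h by (auto simp: homeomorphism_def)
  show "inj_on T X" using h unfolding homeomorphism_def by (metis inj_on_inverseI)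
qed

lemma inv_iter_in:
  assumes "T ` X = X" "a \<in> X"
  shows "((inv_into X T)^^m) a \<in> X"
proof (induction m)
  case (Suc m) then show ?case using assms(1) inv_into_into[of _ T X] by (metis funpow.simps(2) o_apply)
qed (use assms in simp)

lemma prod_sys:
  fixes X1 X2 :: "(nat \<Rightarrow> real) set"
  assumes s1: "is_system X1 T1" and s2: "is_system X2 T2"
    and Zdef: "Z = (\<lambda>p. ilv (fst p) (snd p)) ` (X1 \<times> X2)"
    and Tdef: "T = (\<lambda>z. ilv (T1 (evc z)) (T2 (odc z)))"
  shows Zchar: "\<And>z. z \<in> Z \<longleftrightarrow> evc z \<in> X1 \<and> odc z \<in> X2"
    and Zcp: "compact Z" and Tcont: "continuous_on Z T" and TZ: "T ` Z = Z" and Tinj: "inj_on T Z"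
    and Titer: "\<And>n z. (T^^n) z = ilv ((T1^^n) (evc z)) ((T2^^n) (odc z))"
    and Tint: "\<And>n z. z \<in> Z \<Longrightarrow> int_iter Z T n z = ilv (int_iter X1 T1 n (evc z)) (int_iter X2 T2 n (odc z))"
proof -
  note f1 = sys_facts[OF s1] and f2 = sys_facts[OF s2]
  show Zc: "z \<in> Z \<longleftrightarrow> evc z \<in> X1 \<and> odc z \<in> X2" for z
  proof
    assume "z \<in> Z" then show "evc z \<in> X1 \<and> odc z \<in> X2" by (auto simp: Zdef)
  next
    assume "evc z \<in> X1 \<and> odc z \<in> X2"
    then have "ilv (fst (evc z, odc z)) (snd (evc z, odc z)) \<in> Z" unfolding Zdef by (intro imageI) auto
    then show "z \<in> Z" by simp
  qed
  show "compact Z" unfolding Zdef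
    by (rule compact_continuous_image[OF cont_ilv[OF continuous_on_fst[OF continuous_on_id] continuous_on_snd[OF continuous_on_id]]])
       (rule compact_Times[OF f1(1) f2(1)])
  show "continuous_on Z T" unfolding Tdef
  proof (rule cont_ilv)
    show "continuous_on Z (\<lambda>z. T1 (evc z))"
      by (rule continuous_on_compose2[OF f1(2) cont_evc]) (auto simp: Zc)
    show "continuous_on Z (\<lambda>z. T2 (odc z))"
      by (rule continuous_on_compose2[OF f2(2) cont_odc]) (auto simp: Zc)
  qed
  show TZ': "T ` Z = Z"
  proof
    show "T ` Z \<subseteq> Z" using f1(3) f2(3) by (auto simp: Zc Tdef image_subset_iff)
    show "Z \<subseteq> T ` Z"
    proof
      fix z assume "z \<in> Z"
      then have "evc z \<in> T1 ` X1" "odc z \<in> T2 ` X2" using f1(3) f2(3) by (auto simp: Zc)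
      then obtain a b where ab: "a \<in> X1" "b \<in> X2" "evc z = T1 a" "odc z = T2 b" by blast
      then have "ilv a b \<in> Z" "T (ilv a b) = z" by (auto simp: Zc Tdef) (metis ilv_evc_odc)
      then show "z \<in> T ` Z" by (metis imageI)
    qed
  qed
  show Tinj': "inj_on T Z"
  proof (rule inj_onI)
    fix z z' assume "z \<in> Z" "z' \<in> Z" "T z = T z'"
    then have "T1 (evc z) = T1 (evc z')" "T2 (odc z) = T2 (odc z')"
      unfolding Tdef by (metis evc_ilv, metis odc_ilv)
    then have "evc z = evc z'" "odc z = odc z'"
      using \<open>z \<in> Z\<close> \<open>z' \<in> Z\<close> f1(4) f2(4) by (auto simp: Zc inj_on_def)
    then show "z = z'" by (metis ilv_evc_odc)
  qed
  show Ti: "(T^^n) z = ilv ((T1^^n) (evc z)) ((T2^^n) (odc z))" for n z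
    by (induction n) (simp_all add: Tdef)
  have inv1: "inv_into Z T z = ilv (inv_into X1 T1 (evc z)) (inv_into X2 T2 (odc z))" if zZ: "z \<in> Z" for z
  proof -
    define w where "w = ilv (inv_into X1 T1 (evc z)) (inv_into X2 T2 (odc z))"
    have ez: "evc z \<in> T1 ` X1" "odc z \<in> T2 ` X2" using zZ f1(3) f2(3) by (auto simp: Zc)
    have wZ: "w \<in> Z" unfolding w_def Zc using ez by (simp add: inv_into_into)
    have "T w = z" unfolding w_def Tdef using ez by (simp add: f_inv_into_f)
    then show ?thesis using inv_into_f_f[OF Tinj' wZ] w_def by simp
  qed
  have inviter: "((inv_into Z T)^^m) z = ilv (((inv_into X1 T1)^^m) (evc z)) (((inv_into X2 T2)^^m) (odc z))"
    if zZ: "z \<in> Z" for z m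
  proof (induction m)
    case 0 then show ?case by simp
  next
    case (Suc m)
    have e: "evc z \<in> X1" "odc z \<in> X2" using zZ by (auto simp: Zc)
    have "((inv_into X1 T1)^^m) (evc z) \<in> X1" "((inv_into X2 T2)^^m) (odc z) \<in> X2"
      by (rule inv_iter_in[OF f1(3) e(1)], rule inv_iter_in[OF f2(3) e(2)])
    then have "ilv (((inv_into X1 T1)^^m) (evc z)) (((inv_into X2 T2)^^m) (odc z)) \<in> Z"
      by (simp add: Zc)
    then show ?case using Suc inv1 by simp
  qed
  show "int_iter Z T n z = ilv (int_iter X1 T1 n (evc z)) (int_iter X2 T2 n (odc z))" if "z \<in> Z" for n z
    using inviter[OF that] Ti by (simp add: int_iter_def)
qed

theorem mainTheorem16:
  fixes A B :: "nat set"
  assumes "0 \<notin> A" and "0 \<notin> B"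
    and "pw_recurrence_md TYPE(nat \<Rightarrow> real) (A \<union> B)"
  shows "pw_recurrence_md TYPE(nat \<Rightarrow> real) A \<or> pw_recurrence_md TYPE(nat \<Rightarrow> real) B"
proof (rule ccontr)
  note H = assms(3)[unfolded pw_recurrence_md_def]
  assume "\<not> ?thesis"
  then have nA: "\<not> pw_recurrence_md TYPE(nat \<Rightarrow> real) A" and nB: "\<not> pw_recurrence_md TYPE(nat \<Rightarrow> real) B"
    by auto
  from nA obtain X1 :: "(nat \<Rightarrow> real) set" and T1 x1 e1 where m1: "minimal_system X1 T1"
    and d1: "distal_system X1 T1" and x1: "x1 \<in> X1" and e1: "e1 > 0"
    and r1: "\<And>n. n \<in> A \<Longrightarrow> \<not> dist ((T1^^n) x1) x1 < e1"
    unfolding pw_recurrence_md_def by blast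
  from nB obtain X2 :: "(nat \<Rightarrow> real) set" and T2 x2 e2 where m2: "minimal_system X2 T2"
    and d2: "distal_system X2 T2" and x2: "x2 \<in> X2" and e2: "e2 > 0"
    and r2: "\<And>n. n \<in> B \<Longrightarrow> \<not> dist ((T2^^n) x2) x2 < e2"
    unfolding pw_recurrence_md_def by blast
  have s1: "is_system X1 T1" and s2: "is_system X2 T2" using m1 m2 by (auto simp: minimal_system_def)
  define Z where "Z = (\<lambda>p. ilv (fst p) (snd p)) ` (X1 \<times> X2)"
  define T where "T = (\<lambda>z. ilv (T1 (evc z)) (T2 (odc z)))"
  note P = prod_sys[OF s1 s2 Z_def T_def]
  note Zc = P(1) and Zcp = P(2) and Tcont = P(3) and TZ = P(4) and Tinj = P(5) and Titer = P(6)
    and Tint = P(7)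
  have f1: "T1 ` X1 = X1" and f2: "T2 ` X2 = X2" using sys_facts s1 s2 by blast+
  define \<xi> where "\<xi> = ilv x1 x2"
  have xiZ: "\<xi> \<in> Z" using x1 x2 by (simp add: Zc \<xi>_def)
  have uc1: "uniformly_continuous_on Z evc" by (rule compact_uniformly_continuous[OF cont_evc Zcp])
  have uc2: "uniformly_continuous_on Z odc" by (rule compact_uniformly_continuous[OF cont_odc Zcp])
  have intZ: "int_iter Z T n z \<in> Z" if "z \<in> Z" for n z by (rule int_iter_in[OF TZ that])
  have distZ: "\<exists>e>0. \<forall>n. e \<le> dist (int_iter Z T n z) (int_iter Z T n z')"
    if zZ: "z \<in> Z" and zZ': "z' \<in> Z" and ne: "z \<noteq> z'" for z z'
  proof (cases "evc z = evc z'")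
    case False
    have ez: "evc z \<in> X1" "evc z' \<in> X1" using zZ zZ' by (auto simp: Zc)
    obtain e where e: "e > 0" "\<forall>n. e \<le> dist (int_iter X1 T1 n (evc z)) (int_iter X1 T1 n (evc z'))"
      using d1 ez False unfolding distal_system_def by blast
    obtain d where d: "d > 0" "\<forall>x\<in>Z. \<forall>x'\<in>Z. dist x' x < d \<longrightarrow> dist (evc x') (evc x) < e"
      using uc1 e(1) unfolding uniformly_continuous_on_def by blast
    have "d \<le> dist (int_iter Z T n z) (int_iter Z T n z')" for n
    proof (rule ccontr)
      assume "\<not> ?thesis"
      then have "dist (int_iter Z T n z') (int_iter Z T n z) < d" by (simp add: dist_commute)
      then have "dist (evc (int_iter Z T n z')) (evc (int_iter Z T n z)) < e"
        using d(2) intZ zZ zZ' by blast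
      then have "dist (int_iter X1 T1 n (evc z')) (int_iter X1 T1 n (evc z)) < e"
        using Tint zZ zZ' by simp
      then show False using e(2) by (simp add: dist_commute not_le[symmetric])
    qed
    then show ?thesis using d(1) by blast
  next
    case True
    then have False': "odc z \<noteq> odc z'" using ne by (metis ilv_evc_odc)
    have ez: "odc z \<in> X2" "odc z' \<in> X2" using zZ zZ' by (auto simp: Zc)
    obtain e where e: "e > 0" "\<forall>n. e \<le> dist (int_iter X2 T2 n (odc z)) (int_iter X2 T2 n (odc z'))"
      using d2 ez False' unfolding distal_system_def by blast
    obtain d where d: "d > 0" "\<forall>x\<in>Z. \<forall>x'\<in>Z. dist x' x < d \<longrightarrow> dist (odc x') (odc x) < e"
      using uc2 e(1) unfolding uniformly_continuous_on_def by blast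
    have "d \<le> dist (int_iter Z T n z) (int_iter Z T n z')" for n
    proof (rule ccontr)
      assume "\<not> ?thesis"
      then have "dist (int_iter Z T n z') (int_iter Z T n z) < d" by (simp add: dist_commute)
      then have "dist (odc (int_iter Z T n z')) (odc (int_iter Z T n z)) < e"
        using d(2) intZ zZ zZ' by blast
      then have "dist (int_iter X2 T2 n (odc z')) (int_iter X2 T2 n (odc z)) < e"
        using Tint zZ zZ' by simp
      then show False using e(2) by (simp add: dist_commute not_le[symmetric])
    qed
    then show ?thesis using d(1) by blast
  qed
  have fwd: "\<exists>e>0. \<forall>n. e \<le> dist ((T^^n) \<xi>) ((T^^n) z)" if zz: "z \<in> Z" and zx: "z \<noteq> \<xi>" for z
  proof -
    obtain e where "e > 0" "\<forall>n. e \<le> dist (int_iter Z T n \<xi>) (int_iter Z T n z)"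
      using distZ[OF xiZ zz] zx by metis
    then show ?thesis by (metis int_iter_nat)
  qed
  have TZs: "T ` Z \<subseteq> Z" using TZ by simp
  define W where "W = closure (range (\<lambda>n. (T^^n) \<xi>))"
  have key: "\<xi> \<in> Y" if y1: "Y \<noteq> {}" and y2: "closed Y" and y3: "Y \<subseteq> W" and y4: "T ` Y \<subseteq> Y" for Y
    by (rule ellis_core[OF Zcp Tcont TZs xiZ fwd y1 y2 y3[unfolded W_def] y4])
  have iterZ: "(T^^n) \<xi> \<in> Z" for n by (induction n) (use xiZ TZs in auto)
  have Zcl: "closed Z" by (rule compact_imp_closed[OF Zcp])
  have WZ: "W \<subseteq> Z" unfolding W_def by (rule closure_minimal) (use iterZ Zcl in auto)
  have Wcl: "closed W" unfolding W_def by simp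
  have Wcp: "compact W" using compact_Int_closed[OF Zcp Wcl] WZ by (simp add: Int_absorb1)
  have orbW: "(T^^n) \<xi> \<in> W" for n unfolding W_def by (rule subsetD[OF closure_subset]) (rule rangeI)
  have xiW: "\<xi> \<in> W" using orbW[of 0] by simp
  have TWc: "continuous_on W T" using Tcont WZ continuous_on_subset by blast
  have TWs: "T ` W \<subseteq> W"
    unfolding W_def
  proof (rule image_closure_subset)
    show "continuous_on (closure (range (\<lambda>n. (T ^^ n) \<xi>))) T" using TWc W_def by simp
    show "T ` range (\<lambda>n. (T ^^ n) \<xi>) \<subseteq> closure (range (\<lambda>n. (T ^^ n) \<xi>))"
    proof (rule image_subsetI)
      fix w assume "w \<in> range (\<lambda>n. (T ^^ n) \<xi>)"
      then obtain n where "w = (T^^n) \<xi>" by blast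
      then have "T w = (T^^Suc n) \<xi>" by simp
      then show "T w \<in> closure (range (\<lambda>n. (T ^^ n) \<xi>))" using orbW[of "Suc n"] W_def by simp
    qed
  qed simp
  have TW: "T ` W = W"
  proof
    show "T ` W \<subseteq> W" by (rule TWs)
    have cTW: "compact (T ` W)" by (rule compact_continuous_image[OF TWc Wcp])
    have "\<xi> \<in> T ` W"
    proof (rule key)
      show "T ` W \<noteq> {}" using xiW by blast
      show "closed (T ` W)" by (rule compact_imp_closed[OF cTW])
      show "T ` W \<subseteq> W" by (rule TWs)
      show "T ` T ` W \<subseteq> T ` W" using TWs by blast
    qed
    have "(T^^n) \<xi> \<in> T ` W" for n
    proof (cases n)
      case 0 then show ?thesis using \<open>\<xi> \<in> T ` W\<close> by simp
    next
      case (Suc m)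
      then have "(T^^n) \<xi> = T ((T^^m) \<xi>)" by simp
      then show ?thesis using orbW[of m] by simp
    qed
    then have "range (\<lambda>n. (T^^n) \<xi>) \<subseteq> T ` W" by blast
    then show "W \<subseteq> T ` W" unfolding W_def
      by (rule closure_minimal) (rule compact_imp_closed[OF cTW[unfolded W_def]])
  qed
  have Winj: "inj_on T W" by (rule inj_on_subset[OF Tinj WZ])
  obtain g where "homeomorphism W W T g"
    using homeomorphism_compact[OF Wcp TWc TW Winj] by blast
  then have sysW: "is_system W T" using Wcp by (auto simp: is_system_def)
  have minW: "minimal_system W T"
    unfolding minimal_system_def
  proof (intro conjI allI impI sysW)
    fix Y assume Y: "Y \<subseteq> W \<and> Y \<noteq> {} \<and> closed Y \<and> T ` Y = Y"
    then have "\<xi> \<in> Y" using key by blast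
    then have "(T^^n) \<xi> \<in> Y" for n by (induction n) (use Y in auto)
    then have "W \<subseteq> Y" unfolding W_def using Y by (intro closure_minimal) auto
    then show "Y = W" using Y by blast
  qed
  have distW: "distal_system W T"
    unfolding distal_system_def
  proof (intro conjI ballI impI sysW)
    fix w w' assume w: "w \<in> W" "w' \<in> W" "w \<noteq> w'"
    have eq: "int_iter W T n v = int_iter Z T n v" if "v \<in> W" for n v
      using int_iter_sub[OF Tinj WZ TW that] by blast
    obtain e where "e > 0" "\<forall>n. e \<le> dist (int_iter Z T n w) (int_iter Z T n w')"
      using distZ[of w w'] w WZ by blast
    then show "\<exists>e>0. \<forall>n. e \<le> dist (int_iter W T n w) (int_iter W T n w')"
      using eq w by auto
  qed
  have rec: "\<forall>e>0. \<exists>n\<in>A \<union> B. dist ((T^^n) \<xi>) \<xi> < e"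
    using H minW distW xiW by blast
  obtain d1 where d1: "d1 > 0" "\<And>z. dist z \<xi> < d1 \<Longrightarrow> dist (evc z) (evc \<xi>) < e1"
    using cont_evc[of UNIV] e1 unfolding continuous_on_iff by blast
  obtain d2 where d2: "d2 > 0" "\<And>z. dist z \<xi> < d2 \<Longrightarrow> dist (odc z) (odc \<xi>) < e2"
    using cont_odc[of UNIV] e2 unfolding continuous_on_iff by blast
  obtain n where n: "n \<in> A \<union> B" "dist ((T^^n) \<xi>) \<xi> < min d1 d2"
    using rec d1(1) d2(1) by (metis min_less_iff_conj)
  have "dist ((T1^^n) x1) x1 < e1"
    using d1(2)[of "(T^^n) \<xi>"] n(2) Titer by (simp add: \<xi>_def)
  moreover have "dist ((T2^^n) x2) x2 < e2"
    using d2(2)[of "(T^^n) \<xi>"] n(2) Titer by (simp add: \<xi>_def)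
  ultimately show False using n(1) r1 r2 by blast
qed

end
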